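(* Let $n$ be a large positive integer, let $\sigma>0$ and $\delta>0$ be constants, let $d=\delta\left(\frac{\log n}{\log\log n}\right)^{1/3}$ (a positive integer), and let $a,b$ be integers with $0\le a<b\le \frac12 L_n\!\left(\frac13,\sigma\right)$ and $\gcd(a,b)=1$. Define $\varphi=\varphi_{a,b}:\mathbb{Z}^d\to\mathbb{Z}$ by $$\varphi\big((v_0,\ldots,v_{d-1})\big)=\sum_{i=0}^{d-1}v_i\,a^{d-i-1}b^i .$$ Then there exists a set $S\subseteq \mathbb{I}\!\left(4L_n\!\left(\frac13,\sigma\right)\right)^d$ such that $\varphi$ restricted to $S$ is a bijection from $S$ onto $\mathbb{I}(b^{d-1})$.
   Context: For $x,\alpha,c\in\mathbb{R}$, $L_x(\alpha,c)=\exp\!\big(c(\log x)^{\alpha}(\log\log x)^{1-\alpha}\big)$. For $L>0$, $\mathbb{I}(L)=\left[-\frac12 L,\frac12 L\right)\cap\mathbb{Z}$ denotes the zero-centred half-open integer interval of length $L$. *)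

theory Defs
  imports Complex_Main
begin

definition Lfun :: "real \<Rightarrow> real \<Rightarrow> real \<Rightarrow> real" where
  "Lfun x \<alpha> c = exp (c * (ln x) powr \<alpha> * (ln (ln x)) powr (1 - \<alpha>))"

definition Ival :: "real \<Rightarrow> int set" where
  "Ival L = {k::int. - L / 2 \<le> real_of_int k \<and> real_of_int k < L / 2}"

text \<open>Vectors in Z^d are integer lists of length d; coordinates v_0..v_{d-1} are v!0..v!(d-1).\<close>
definition phi :: "int \<Rightarrow> int \<Rightarrow> nat \<Rightarrow> int list \<Rightarrow> int" where
  "phi a b d v = (\<Sum>i<d. v ! i * a ^ (d - i - 1) * b ^ i)"

end

theory Submission
  imports Defs
begin

lemma phi_snoc:
  assumes "length v = Suc m"
  shows "phi a b (Suc (Suc m)) (v @ [x]) = a * phi a b (Suc m) v + x * b ^ Suc m"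
proof -
  have "phi a b (Suc (Suc m)) (v @ [x]) =
        (\<Sum>i<Suc m. (v @ [x]) ! i * a ^ (Suc (Suc m) - i - 1) * b ^ i) + x * b ^ Suc m"
    unfolding phi_def using assms by (simp add: nth_append)
  also have "(\<Sum>i<Suc m. (v @ [x]) ! i * a ^ (Suc (Suc m) - i - 1) * b ^ i)
      = (\<Sum>i<Suc m. a * (v ! i * a ^ (Suc m - i - 1) * b ^ i))"
  proof (rule sum.cong)
    fix i assume "i \<in> {..<Suc m}"
    then have i: "i < Suc m" by simp
    then have "Suc (Suc m) - i - 1 = Suc (Suc m - i - 1)" by simp
    then show "(v @ [x]) ! i * a ^ (Suc (Suc m) - i - 1) * b ^ i
      = a * (v ! i * a ^ (Suc m - i - 1) * b ^ i)"
      using i assms by (simp add: nth_append)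
  qed simp
  also have "\<dots> = a * phi a b (Suc m) v"
    unfolding phi_def by (simp add: sum_distrib_left distrib_left)
  finally show ?thesis .
qed

lemma centered:
  fixes B c :: int
  assumes "B \<ge> 1"
  shows "\<exists>P. B dvd (P - c) \<and> 2 * \<bar>P\<bar> \<le> B"
proof -
  define r where "r = c mod B"
  have r: "0 \<le> r" "r < B" "B dvd (r - c)"
    using assms by (auto simp: r_def mod_eq_dvd_iff[symmetric])
  show ?thesis
  proof (cases "2 * r \<le> B")
    case True then show ?thesis using r by (intro exI[of _ r]) auto
  next
    case False
    have "B dvd (r - B - c)" using r(3)
      by (metis diff_right_commute dvd_diff dvd_refl)
    then show ?thesis using r False by (intro exI[of _ "r - B"]) auto
  qed
qed

lemma repr:
  fixes a b :: int
  assumes "0 \<le> a" "a < b" "gcd a b = 1"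
  shows "\<forall>t. 2 * \<bar>t\<bar> \<le> b ^ Suc m \<longrightarrow>
     (\<exists>v. length v = Suc m \<and> (\<forall>x\<in>set v. \<bar>x\<bar> \<le> b) \<and> phi a b (Suc m) v = t)"
proof (induction m)
  case 0
  show ?case
  proof (intro allI impI)
    fix t :: int assume "2 * \<bar>t\<bar> \<le> b ^ Suc 0"
    then have "\<bar>t\<bar> \<le> b" by simp
    then show "\<exists>v. length v = Suc 0 \<and> (\<forall>x\<in>set v. \<bar>x\<bar> \<le> b) \<and> phi a b (Suc 0) v = t"
      by (intro exI[of _ "[t]"]) (simp add: phi_def)
  qed
next
  case (Suc m)
  show ?case
  proof (intro allI impI)
    fix t :: int assume t: "2 * \<bar>t\<bar> \<le> b ^ Suc (Suc m)"
    define B where "B = b ^ Suc m"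
    have b1: "b \<ge> 1" using assms by simp
    have B1: "B \<ge> 1" unfolding B_def using b1 by (metis one_le_power)
    have "coprime a b" using assms(3) by (simp add: coprime_iff_gcd_eq_1)
    then have "coprime a B" unfolding B_def by simp
    then have "gcd a B = 1" by simp
    then obtain u w where uw: "u * a + w * B = 1" using bezout_int[of a B] by metis
    obtain P where P: "B dvd (P - t * u)" "2 * \<bar>P\<bar> \<le> B"
      using centered[OF B1] by blast
    have "t - a * P = t * (u * a + w * B) - a * P" using uw by simp
    also have "\<dots> = B * (t * w) - a * (P - t * u)" by (simp add: algebra_simps)
    finally have "B dvd t - a * P" using P(1) by (metis dvd_diff dvd_mult dvd_triv_left)
    then obtain x where x: "t - a * P = B * x" by (auto simp: dvd_def)
    obtain v where v: "length v = Suc m" "\<forall>y\<in>set v. \<bar>y\<bar> \<le> b" "phi a b (Suc m) v = P"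
      using Suc.IH P(2) unfolding B_def by blast
    have tb: "2 * \<bar>t\<bar> \<le> b * B" using t unfolding B_def by (simp add: mult.commute)
    have "2 * \<bar>a * P\<bar> \<le> a * B" using P(2) assms(1)
      by (simp add: abs_mult mult_left_mono mult.left_commute)
    then have "2 * \<bar>B * x\<bar> \<le> b * B + a * B" using x tb by linarith
    also have "\<dots> \<le> 2 * b * B" using assms B1 by (simp add: mult_right_mono)
    finally have "B * (2 * \<bar>x\<bar>) \<le> B * (2 * b)" using B1 by (simp add: abs_mult algebra_simps)
    then have xb: "\<bar>x\<bar> \<le> b" using B1 by simp
    show "\<exists>v. length v = Suc (Suc m) \<and> (\<forall>y\<in>set v. \<bar>y\<bar> \<le> b) \<and> phi a b (Suc (Suc m)) v = t"
    proof (intro exI[of _ "v @ [x]"] conjI)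
      show "phi a b (Suc (Suc m)) (v @ [x]) = t"
        using phi_snoc[OF v(1)] v(3) x unfolding B_def by (simp add: algebra_simps)
    qed (use v xb in auto)
  qed
qed

theorem lemma5p6:
  fixes \<sigma> \<delta> :: real
  assumes "\<sigma> > 0" and "\<delta> > 0"
  shows "\<exists>N::nat. \<forall>n::nat \<ge> N. \<forall>d::nat. \<forall>a b :: int.
     d > 0 \<longrightarrow>
     real d = \<delta> * (ln (real n) / ln (ln (real n))) powr (1/3) \<longrightarrow>
     0 \<le> a \<longrightarrow> a < b \<longrightarrow> real_of_int b \<le> Lfun (real n) (1/3) \<sigma> / 2 \<longrightarrow>
     gcd a b = 1 \<longrightarrow>
     (\<exists>S. S \<subseteq> {v. length v = d \<and> (\<forall>x\<in>set v. x \<in> Ival (4 * Lfun (real n) (1/3) \<sigma>))}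
          \<and> bij_betw (phi a b d) S (Ival (real_of_int (b ^ (d - 1)))))"
proof (intro exI[of _ 0] allI impI)
  fix n :: nat and d :: nat and a b :: int
  assume d: "d > 0" and a0: "0 \<le> a" and ab: "a < b"
    and bM: "real_of_int b \<le> Lfun (real n) (1/3) \<sigma> / 2" and g: "gcd a b = 1"
  define M where "M = Lfun (real n) (1/3) \<sigma>"
  have M0: "M > 0" unfolding M_def Lfun_def by simp
  define I where "I = Ival (real_of_int (b ^ (d - 1)))"
  obtain m where m: "d = Suc m" using d by (cases d) auto
  have R: "\<forall>t\<in>I. \<exists>v. length v = d \<and> (\<forall>x\<in>set v. \<bar>x\<bar> \<le> b) \<and> phi a b d v = t"
  proof
    fix t assume "t \<in> I"
    then have "-(real_of_int (b ^ m)) \<le> 2 * real_of_int t" "2 * real_of_int t < real_of_int (b ^ m)"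
      unfolding I_def Ival_def m by auto
    then have "2 * \<bar>t\<bar> \<le> b ^ m" by linarith
    also have "b ^ m \<le> b ^ Suc m" using a0 ab by simp
    finally show "\<exists>v. length v = d \<and> (\<forall>x\<in>set v. \<bar>x\<bar> \<le> b) \<and> phi a b d v = t"
      using repr[OF a0 ab g, of m] m by blast
  qed
  define f where "f t = (SOME v. length v = d \<and> (\<forall>x\<in>set v. \<bar>x\<bar> \<le> b) \<and> phi a b d v = t)" for t
  have f: "length (f t) = d \<and> (\<forall>x\<in>set (f t). \<bar>x\<bar> \<le> b) \<and> phi a b d (f t) = t" if "t \<in> I" for t
    unfolding f_def by (rule someI_ex) (use R that in blast)
  show "\<exists>S. S \<subseteq> {v. length v = d \<and> (\<forall>x\<in>set v. x \<in> Ival (4 * Lfun (real n) (1/3) \<sigma>))}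
          \<and> bij_betw (phi a b d) S (Ival (real_of_int (b ^ (d - 1))))"
  proof (intro exI[of _ "f ` I"] conjI)
    show "f ` I \<subseteq> {v. length v = d \<and> (\<forall>x\<in>set v. x \<in> Ival (4 * Lfun (real n) (1/3) \<sigma>))}"
    proof
      fix v assume "v \<in> f ` I"
      then obtain t where t: "t \<in> I" "v = f t" by blast
      have "\<forall>x\<in>set v. x \<in> Ival (4 * M)"
      proof
        fix x assume "x \<in> set v"
        then have "\<bar>x\<bar> \<le> b" using f[OF t(1)] t(2) by blast
        then have "\<bar>real_of_int x\<bar> \<le> M / 2" using bM unfolding M_def by linarith
        then show "x \<in> Ival (4 * M)" unfolding Ival_def using M0 by auto
      qed
      then show "v \<in> {v. length v = d \<and> (\<forall>x\<in>set v. x \<in> Ival (4 * Lfun (real n) (1/3) \<sigma>))}"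
        using f[OF t(1)] t(2) unfolding M_def by auto
    qed
    show "bij_betw (phi a b d) (f ` I) (Ival (real_of_int (b ^ (d - 1))))"
      unfolding bij_betw_def I_def[symmetric]
    proof
      show "inj_on (phi a b d) (f ` I)"
        by (rule inj_onI) (use f in auto)
      show "phi a b d ` f ` I = I"
        using f by (force simp: image_iff)
    qed
  qed
qed

end
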